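(* Let $\mathbb{X}\subseteq\mathbb{R}^{n_x}$, $\mathbb{U}\subseteq\mathbb{R}^{n_u}$ with $0<\mu_L(\mathbb{U})<\infty$ ($\mu_L$ = Lebesgue measure), let $T>0$ be an integer, let $p(x_0)$ be an initial density on $\mathbb{X}$ and $p(x_{t+1}\mid x_t,u_t)$, $t\in\{0,\dots,T-1\}$, transition densities, and let $c_t:\mathbb{X}\times\mathbb{U}\to\mathbb{R}_{\ge 0}$ ($t\in\{0,\dots,T-1\}$), $c_T:\mathbb{X}\to\mathbb{R}_{\ge 0}$. Let $p(\tau\mid\mathcal{O}_{0:T}=1)$ be the optimal trajectory density of control as inference, i.e. the density on trajectories $\tau=(x_{0:T},u_{0:T-1})$ satisfying $$p(\tau\mid\mathcal{O}_{0:T}=1)\propto p(x_0)\prod_{t=0}^{T-1}p(x_{t+1}\mid x_t,u_t)\,\exp\Big(-c_T(x_T)-\sum_{t=0}^{T-1}c_t(x_t,u_t)\Big).$$ For policies $\pi=\{\pi_t\}_{t=0}^{T-1}$, where each $\pi_t(\cdot\mid x)$ is a probability density on $\mathbb{U}$ for every $x\in\mathbb{X}$, let $p^\pi(\tau)=p(x_0)\prod_{t=0}^{T-1}p(x_{t+1}\mid x_t,u_t)\pi_t(u_t\mid x_t)$. Then for any $\eta>-1$, $\eta\neq 0$, minimizing the R\'enyi divergence $D_{1+\eta}(p^\pi\,\|\,p(\cdot\mid\mathcal{O}_{0:T}=1))$ with respect to $p^\pi$ of this form (i.e. with respect to $\{\pi_t\}$) is equivalent to the problem $$\underset{\{\pi_t\}_{t=0}^{T-1}}{\mathrm{minimize}}\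 \ \frac{1}{\eta}\log\mathbb{E}_{p^\pi(\tau)}\Big[\exp\Big(\eta c_T(x_T)+\eta\sum_{t=0}^{T-1}\big(c_t(x_t,u_t)+\log\pi_t(u_t\mid x_t)\big)\Big)\Big].$$
   Context: For densities $p_1,p_2$ and $\alpha>0$, $\alpha\ne1$, the R\'enyi divergence is $D_\alpha(p_1\|p_2)=\frac{1}{\alpha-1}\log\int_{\{p_1p_2>0\}}p_1(u)^\alpha p_2(u)^{1-\alpha}\,du$. In control as inference, binary optimality variables $\mathcal{O}_t$ satisfy $p(\mathcal{O}_t=1\mid x_t,u_t)=\exp(-c_t(x_t,u_t))$, $p(\mathcal{O}_T=1\mid x_T)=\exp(-c_T(x_T))$, and the control prior is uniform, $p(u_t)=1/\mu_L(\mathbb{U})$. "Equivalent" means the two minimization problems over $\{\pi_t\}$ have the same minimizers. *)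

theory Defs
  imports "HOL-Analysis.Analysis"
begin

definition elog :: "ennreal \<Rightarrow> ereal" where
  "elog v = (if v = 0 then -\<infinity> else if v = \<infinity> then \<infinity> else ereal (ln (enn2real v)))"

definition renyi :: "'a measure \<Rightarrow> real \<Rightarrow> ('a \<Rightarrow> real) \<Rightarrow> ('a \<Rightarrow> real) \<Rightarrow> ereal" where
  "renyi M \<alpha> p1 p2 = ereal (1 / (\<alpha> - 1)) *
     elog (\<integral>\<^sup>+ u. ennreal (p1 u powr \<alpha> * p2 u powr (1 - \<alpha>)) * indicator {v. p1 v * p2 v > 0} u \<partial>M)"

definition is_density :: "'a measure \<Rightarrow> ('a \<Rightarrow> real) \<Rightarrow> bool" where
  "is_density M f \<longleftrightarrow> f \<in> borel_measurable M \<and> (\<forall>x\<in>space M. 0 \<le> f x)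
     \<and> (\<integral>\<^sup>+ x. ennreal (f x) \<partial>M) = 1"

definition traj_M :: "'x::euclidean_space set \<Rightarrow> 'u::euclidean_space set \<Rightarrow> nat
    \<Rightarrow> ((nat \<Rightarrow> 'x) \<times> (nat \<Rightarrow> 'u)) measure" where
  "traj_M X U T = (\<Pi>\<^sub>M t\<in>{..T}. restrict_space lborel X) \<Otimes>\<^sub>M (\<Pi>\<^sub>M t\<in>{..<T}. restrict_space lborel U)"

definition dyn :: "('x \<Rightarrow> real) \<Rightarrow> (nat \<Rightarrow> 'x \<Rightarrow> 'u \<Rightarrow> 'x \<Rightarrow> real) \<Rightarrow> nat
    \<Rightarrow> (nat \<Rightarrow> 'x) \<times> (nat \<Rightarrow> 'u) \<Rightarrow> real" where
  "dyn p0 P T \<tau> = p0 (fst \<tau> 0) * (\<Prod>t<T. P t (fst \<tau> t) (snd \<tau> t) (fst \<tau> (Suc t)))"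

definition total_cost :: "(nat \<Rightarrow> 'x \<Rightarrow> 'u \<Rightarrow> real) \<Rightarrow> ('x \<Rightarrow> real) \<Rightarrow> nat
    \<Rightarrow> (nat \<Rightarrow> 'x) \<times> (nat \<Rightarrow> 'u) \<Rightarrow> real" where
  "total_cost c cT T \<tau> = cT (fst \<tau> T) + (\<Sum>t<T. c t (fst \<tau> t) (snd \<tau> t))"

definition p_pi :: "('x \<Rightarrow> real) \<Rightarrow> (nat \<Rightarrow> 'x \<Rightarrow> 'u \<Rightarrow> 'x \<Rightarrow> real) \<Rightarrow> (nat \<Rightarrow> 'x \<Rightarrow> 'u \<Rightarrow> real)
    \<Rightarrow> nat \<Rightarrow> (nat \<Rightarrow> 'x) \<times> (nat \<Rightarrow> 'u) \<Rightarrow> real" where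
  "p_pi p0 P \<pi> T \<tau> = dyn p0 P T \<tau> * (\<Prod>t<T. \<pi> t (fst \<tau> t) (snd \<tau> t))"

text \<open>Joint p(tau, O_{0:T}=1) with uniform control prior 1/mu_L(U).\<close>
definition joint_opt :: "'u::euclidean_space set \<Rightarrow> ('x \<Rightarrow> real) \<Rightarrow> (nat \<Rightarrow> 'x \<Rightarrow> 'u \<Rightarrow> 'x \<Rightarrow> real)
    \<Rightarrow> (nat \<Rightarrow> 'x \<Rightarrow> 'u \<Rightarrow> real) \<Rightarrow> ('x \<Rightarrow> real) \<Rightarrow> nat \<Rightarrow> (nat \<Rightarrow> 'x) \<times> (nat \<Rightarrow> 'u) \<Rightarrow> real" where
  "joint_opt U p0 P c cT T \<tau> =
     dyn p0 P T \<tau> * (1 / measure lborel U) ^ T * exp (- total_cost c cT T \<tau>)"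

definition p_opt :: "'x::euclidean_space set \<Rightarrow> 'u::euclidean_space set \<Rightarrow> ('x \<Rightarrow> real)
    \<Rightarrow> (nat \<Rightarrow> 'x \<Rightarrow> 'u \<Rightarrow> 'x \<Rightarrow> real) \<Rightarrow> (nat \<Rightarrow> 'x \<Rightarrow> 'u \<Rightarrow> real) \<Rightarrow> ('x \<Rightarrow> real) \<Rightarrow> nat
    \<Rightarrow> (nat \<Rightarrow> 'x) \<times> (nat \<Rightarrow> 'u) \<Rightarrow> real" where
  "p_opt X U p0 P c cT T \<tau> = joint_opt U p0 P c cT T \<tau> /
     enn2real (\<integral>\<^sup>+ \<sigma>. ennreal (joint_opt U p0 P c cT T \<sigma>) \<partial>traj_M X U T)"

definition policies :: "'x::euclidean_space set \<Rightarrow> 'u::euclidean_space set \<Rightarrow> nat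
    \<Rightarrow> (nat \<Rightarrow> 'x \<Rightarrow> 'u \<Rightarrow> real) set" where
  "policies X U T = {\<pi>. \<forall>t<T.
      (\<lambda>(x, u). \<pi> t x u) \<in> borel_measurable (restrict_space lborel X \<Otimes>\<^sub>M restrict_space lborel U)
      \<and> (\<forall>x\<in>X. is_density (restrict_space lborel U) (\<pi> t x))}"

definition rs_objective :: "'x::euclidean_space set \<Rightarrow> 'u::euclidean_space set \<Rightarrow> ('x \<Rightarrow> real)
    \<Rightarrow> (nat \<Rightarrow> 'x \<Rightarrow> 'u \<Rightarrow> 'x \<Rightarrow> real) \<Rightarrow> (nat \<Rightarrow> 'x \<Rightarrow> 'u \<Rightarrow> real) \<Rightarrow> ('x \<Rightarrow> real) \<Rightarrow> nat
    \<Rightarrow> real \<Rightarrow> (nat \<Rightarrow> 'x \<Rightarrow> 'u \<Rightarrow> real) \<Rightarrow> ereal" where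
  "rs_objective X U p0 P c cT T \<eta> \<pi> = ereal (1 / \<eta>) *
     elog (\<integral>\<^sup>+ \<tau>. ennreal (p_pi p0 P \<pi> T \<tau> *
       exp (\<eta> * cT (fst \<tau> T) + \<eta> * (\<Sum>t<T. c t (fst \<tau> t) (snd \<tau> t) + ln (\<pi> t (fst \<tau> t) (snd \<tau> t)))))
       \<partial>traj_M X U T)"

end

theory Submission
  imports Defs
begin


lemma sf_restr: "A \<in> sets lborel \<Longrightarrow> sigma_finite_measure (restrict_space lborel A)"
  by (rule sigma_finite_measure_restrict_space[OF sigma_finite_lborel])

lemma psf: "A \<in> sets lborel \<Longrightarrow> product_sigma_finite (\<lambda>_. restrict_space lborel A)"
  unfolding product_sigma_finite_def using sf_restr by blast

lemma fst_meas: "t \<le> T \<Longrightarrow> (\<lambda>\<tau>. fst \<tau> t) \<in> measurable (traj_M X U T) (restrict_space lborel X)"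
  unfolding traj_M_def
  by (rule measurable_compose[OF measurable_fst measurable_component_singleton]) auto

lemma snd_meas: "t < T \<Longrightarrow> (\<lambda>\<tau>. snd \<tau> t) \<in> measurable (traj_M X U T) (restrict_space lborel U)"
  unfolding traj_M_def
  by (rule measurable_compose[OF measurable_snd measurable_component_singleton]) auto

lemma P_comp_meas:
  assumes "(\<lambda>((x, u), y). P t x u y) \<in> borel_measurable
        ((restrict_space lborel X \<Otimes>\<^sub>M restrict_space lborel U) \<Otimes>\<^sub>M restrict_space lborel X)"
    and "t < T"
  shows "(\<lambda>\<tau>. P t (fst \<tau> t) (snd \<tau> t) (fst \<tau> (Suc t))) \<in> borel_measurable (traj_M X U T)"
proof -
  have "(\<lambda>\<tau>. ((fst \<tau> t, snd \<tau> t), fst \<tau> (Suc t))) \<in> measurable (traj_M X U T)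
     ((restrict_space lborel X \<Otimes>\<^sub>M restrict_space lborel U) \<Otimes>\<^sub>M restrict_space lborel X)"
    using assms(2) by (intro measurable_Pair fst_meas snd_meas) auto
  from measurable_comp[OF this assms(1)] show ?thesis by (simp add: comp_def)
qed

lemma c_comp_meas:
  assumes "(\<lambda>(x, u). c t x u) \<in> borel_measurable
        (restrict_space lborel X \<Otimes>\<^sub>M restrict_space lborel U)"
    and "t < T"
  shows "(\<lambda>\<tau>. c t (fst \<tau> t) (snd \<tau> t)) \<in> borel_measurable (traj_M X U T)"
proof -
  have "(\<lambda>\<tau>. (fst \<tau> t, snd \<tau> t)) \<in> measurable (traj_M X U T)
     (restrict_space lborel X \<Otimes>\<^sub>M restrict_space lborel U)"
    using assms(2) by (intro measurable_Pair fst_meas snd_meas) auto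
  from measurable_comp[OF this assms(1)] show ?thesis by (simp add: comp_def)
qed

lemma space_traj: "\<tau> \<in> space (traj_M X U T) \<Longrightarrow> (\<forall>t\<le>T. fst \<tau> t \<in> X) \<and> (\<forall>t<T. snd \<tau> t \<in> U)"
  unfolding traj_M_def by (auto simp: space_pair_measure space_PiM space_restrict_space PiE_def Pi_def)

lemma sf_PiM: "A \<in> sets lborel \<Longrightarrow> finite I \<Longrightarrow> sigma_finite_measure (PiM I (\<lambda>_. restrict_space lborel A))"
proof -
  assume A: "A \<in> sets lborel" and I: "finite I"
  interpret product_sigma_finite "\<lambda>_. restrict_space lborel A" using psf[OF A] .
  interpret F: finite_product_sigma_finite "\<lambda>_. restrict_space lborel A" I
    by unfold_locales (rule I)
  show ?thesis by (rule F.sigma_finite_measure_axioms)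
qed

lemma dyn_meas:
  assumes "p0 \<in> borel_measurable (restrict_space lborel X)"
    and "\<forall>t<T. (\<lambda>((x, u), y). P t x u y) \<in> borel_measurable
        ((restrict_space lborel X \<Otimes>\<^sub>M restrict_space lborel U) \<Otimes>\<^sub>M restrict_space lborel X)"
  shows "dyn p0 P T \<in> borel_measurable (traj_M X U T)"
proof -
  have "(\<lambda>\<tau>. p0 (fst \<tau> 0)) \<in> borel_measurable (traj_M X U T)"
    by (rule measurable_compose[OF fst_meas assms(1)]) simp
  moreover have "(\<lambda>\<tau>. \<Prod>t<T. P t (fst \<tau> t) (snd \<tau> t) (fst \<tau> (Suc t))) \<in> borel_measurable (traj_M X U T)"
    by (rule borel_measurable_prod) (rule P_comp_meas, use assms(2) in auto)
  ultimately show ?thesis unfolding dyn_def[abs_def] by (rule borel_measurable_times)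
qed

lemma dyn_nonneg:
  assumes "is_density (restrict_space lborel X) p0"
    and "\<forall>t<T. \<forall>x\<in>X. \<forall>u\<in>U. is_density (restrict_space lborel X) (P t x u)"
    and "\<tau> \<in> space (traj_M X U T)"
  shows "0 \<le> dyn p0 P T \<tau>"
proof -
  note sp = space_traj[OF assms(3)]
  have "0 \<le> p0 (fst \<tau> 0)" using assms(1) sp by (auto simp: is_density_def space_restrict_space)
  moreover have "0 \<le> (\<Prod>t<T. P t (fst \<tau> t) (snd \<tau> t) (fst \<tau> (Suc t)))"
    using assms(2) sp by (intro prod_nonneg) (auto simp: is_density_def space_restrict_space)
  ultimately show ?thesis unfolding dyn_def by simp
qed

lemma dyn_upd: "dyn p0 P (Suc n) (xs(Suc n := y), us(n := v)) = dyn p0 P n (xs, us) * P n (xs n) v y"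
proof -
  have "(\<Prod>t<n. P t ((xs(Suc n := y)) t) ((us(n := v)) t) ((xs(Suc n := y)) (Suc t)))
      = (\<Prod>t<n. P t (xs t) (us t) (xs (Suc t)))"
    by (rule prod.cong) auto
  then show ?thesis unfolding dyn_def by (simp add: mult.assoc)
qed


lemma dyn_int:
  fixes X :: "'x::euclidean_space set" and U :: "'u::euclidean_space set"
  assumes Xb: "X \<in> sets lborel" and Ub: "U \<in> sets lborel"
    and p0d: "is_density (restrict_space lborel X) p0"
    and Pm: "\<forall>t<T. (\<lambda>((x, u), y). P t x u y) \<in> borel_measurable
        ((restrict_space lborel X \<Otimes>\<^sub>M restrict_space lborel U) \<Otimes>\<^sub>M restrict_space lborel X)"
    and Pd: "\<forall>t<T. \<forall>x\<in>X. \<forall>u\<in>U. is_density (restrict_space lborel X) (P t x u)"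
  shows "(\<integral>\<^sup>+\<tau>. ennreal (dyn p0 P T \<tau>) \<partial>traj_M X U T) = emeasure lborel U ^ T"
  using Pm Pd
proof (induction T)
  case 0
  let ?X = "restrict_space lborel X"
  interpret PX: product_sigma_finite "\<lambda>_. ?X" using psf[OF Xb] .
  have sfc: "sigma_finite_measure (count_space {\<lambda>_::nat. undefined::'u})"
    by (rule sigma_finite_measure_count_space_finite) simp
  have p0m: "p0 \<in> borel_measurable ?X" using p0d by (simp add: is_density_def)
  have m: "(\<lambda>\<tau>. ennreal (dyn p0 P 0 \<tau>)) \<in> borel_measurable (PiM {0} (\<lambda>_. ?X) \<Otimes>\<^sub>M count_space {\<lambda>_::nat. undefined::'u})"
    using dyn_meas[OF p0m, of 0 P U] by (simp add: traj_M_def PiM_empty)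
  have "(\<integral>\<^sup>+\<tau>. ennreal (dyn p0 P 0 \<tau>) \<partial>traj_M X U 0)
      = (\<integral>\<^sup>+xs. \<integral>\<^sup>+us. ennreal (dyn p0 P 0 (xs, us)) \<partial>count_space {\<lambda>_::nat. undefined::'u} \<partial>PiM {0} (\<lambda>_. ?X))"
    by (simp add: traj_M_def PiM_empty sigma_finite_measure.nn_integral_fst[OF sfc m])
  also have "\<dots> = (\<integral>\<^sup>+xs. ennreal (p0 (xs 0)) \<partial>PiM {0::nat} (\<lambda>_. ?X))"
    by (simp add: dyn_def nn_integral_count_space_finite)
  also have "\<dots> = (\<integral>\<^sup>+x. ennreal (p0 x) \<partial>?X)"
    by (rule PX.product_nn_integral_singleton) (use p0m in measurable)
  also have "\<dots> = 1" using p0d by (simp add: is_density_def)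
  finally show ?case by simp
next
  case (Suc n)
  let ?X = "restrict_space lborel X"
  let ?U = "restrict_space lborel U"
  let ?PX = "\<lambda>n::nat. PiM {..n} (\<lambda>_. ?X)"
  let ?PU = "\<lambda>n::nat. PiM {..<n} (\<lambda>_. ?U)"
  let ?\<mu> = "emeasure lborel U"
  interpret PX: product_sigma_finite "\<lambda>_. ?X" using psf[OF Xb] .
  interpret PU: product_sigma_finite "\<lambda>_. ?U" using psf[OF Ub] .
  interpret SU: sigma_finite_measure ?U using sf_restr[OF Ub] .
  interpret SX: sigma_finite_measure ?X using sf_restr[OF Xb] .
  interpret XU: pair_sigma_finite ?X ?U by unfold_locales
  have sfU: "\<And>m. sigma_finite_measure (?PU m)" by (rule sf_PiM[OF Ub]) simp
  have p0m: "p0 \<in> borel_measurable ?X" using p0d by (simp add: is_density_def)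
  have IH: "(\<integral>\<^sup>+\<tau>. ennreal (dyn p0 P n \<tau>) \<partial>traj_M X U n) = ?\<mu> ^ n"
    using Suc by auto
  have Fm: "(\<lambda>\<tau>. ennreal (dyn p0 P (Suc n) \<tau>)) \<in> borel_measurable (?PX (Suc n) \<Otimes>\<^sub>M ?PU (Suc n))"
    using dyn_meas[OF p0m Suc.prems(1)] by (simp add: traj_M_def)
  have Dm: "(\<lambda>\<tau>. ennreal (dyn p0 P n \<tau>)) \<in> borel_measurable (?PX n \<Otimes>\<^sub>M ?PU n)"
    using dyn_meas[OF p0m, of n P U] Suc.prems(1) by (simp add: traj_M_def)
  define D where "D xs = (\<integral>\<^sup>+us. ennreal (dyn p0 P n (xs, us)) \<partial>?PU n)" for xs
  have Dmeas: "D \<in> borel_measurable (?PX n)"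
    unfolding D_def by (rule sigma_finite_measure.borel_measurable_nn_integral_fst[OF sfU Dm])
  have Hm: "(\<lambda>xs. \<integral>\<^sup>+us. ennreal (dyn p0 P (Suc n) (xs, us)) \<partial>?PU (Suc n)) \<in> borel_measurable (?PX (Suc n))"
    by (rule sigma_finite_measure.borel_measurable_nn_integral_fst[OF sfU Fm])
  have inner: "(\<integral>\<^sup>+y. \<integral>\<^sup>+us. ennreal (dyn p0 P (Suc n) (xs(Suc n := y), us)) \<partial>?PU (Suc n) \<partial>?X) = D xs * ?\<mu>"
    if xs: "xs \<in> space (?PX n)" for xs
  proof -
    have xsn: "xs n \<in> X" using xs by (auto simp: space_PiM space_restrict_space)
    have Qm: "(\<lambda>(y, v). ennreal (P n (xs n) v y)) \<in> borel_measurable (?X \<Otimes>\<^sub>M ?U)"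
    proof -
      have "(\<lambda>(y, v). ((xs n, v), y)) \<in> measurable (?X \<Otimes>\<^sub>M ?U) ((?X \<Otimes>\<^sub>M ?U) \<Otimes>\<^sub>M ?X)"
        using xsn by (auto simp: space_restrict_space)
      moreover have "(\<lambda>((x, u), y). P n x u y) \<in> borel_measurable ((?X \<Otimes>\<^sub>M ?U) \<Otimes>\<^sub>M ?X)"
        using Suc.prems(1) by auto
      ultimately have "(\<lambda>((x, u), y). P n x u y) \<circ> (\<lambda>(y, v). ((xs n, v), y)) \<in> borel_measurable (?X \<Otimes>\<^sub>M ?U)"
        by (rule measurable_comp)
      then have "(\<lambda>(y, v). P n (xs n) v y) \<in> borel_measurable (?X \<Otimes>\<^sub>M ?U)"
        by (simp add: comp_def case_prod_unfold)
      then show ?thesis by measurable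
    qed
    have step1: "(\<integral>\<^sup>+us. ennreal (dyn p0 P (Suc n) (xs(Suc n := y), us)) \<partial>?PU (Suc n))
        = D xs * (\<integral>\<^sup>+v. ennreal (P n (xs n) v y) \<partial>?U)" if y: "y \<in> X" for y
    proof -
      have xs': "xs(Suc n := y) \<in> space (?PX (Suc n))"
        using xs y by (auto simp: space_PiM space_restrict_space PiE_def extensional_def Pi_def)
      have "(\<integral>\<^sup>+us. ennreal (dyn p0 P (Suc n) (xs(Suc n := y), us)) \<partial>?PU (Suc n))
          = (\<integral>\<^sup>+us. \<integral>\<^sup>+v. ennreal (dyn p0 P (Suc n) (xs(Suc n := y), us(n := v))) \<partial>?U \<partial>?PU n)"
        unfolding lessThan_Suc
        by (rule PU.product_nn_integral_insert) (auto intro: measurable_Pair2[OF Fm xs', simplified lessThan_Suc])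
      also have "\<dots> = (\<integral>\<^sup>+us. \<integral>\<^sup>+v. ennreal (dyn p0 P n (xs, us)) * ennreal (P n (xs n) v y) \<partial>?U \<partial>?PU n)"
      proof (intro nn_integral_cong)
        fix us v assume "us \<in> space (?PU n)"
        then have "(xs, us) \<in> space (traj_M X U n)" using xs by (simp add: traj_M_def space_pair_measure)
        then have "0 \<le> dyn p0 P n (xs, us)" by (rule dyn_nonneg[OF p0d, rotated]) (use Suc.prems(2) in auto)
        then show "ennreal (dyn p0 P (Suc n) (xs(Suc n := y), us(n := v))) = ennreal (dyn p0 P n (xs, us)) * ennreal (P n (xs n) v y)"
          by (simp add: dyn_upd ennreal_mult')
      qed
      also have "\<dots> = (\<integral>\<^sup>+us. ennreal (dyn p0 P n (xs, us)) * (\<integral>\<^sup>+v. ennreal (P n (xs n) v y) \<partial>?U) \<partial>?PU n)"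
        by (intro nn_integral_cong nn_integral_cmult) (use measurable_compose_Pair1[OF _ Qm, of y] y in \<open>auto simp: space_restrict_space\<close>)
      also have "\<dots> = D xs * (\<integral>\<^sup>+v. ennreal (P n (xs n) v y) \<partial>?U)"
        unfolding D_def by (rule nn_integral_multc) (use measurable_Pair2[OF Dm] xs in auto)
      finally show ?thesis .
    qed
    have "(\<integral>\<^sup>+y. \<integral>\<^sup>+us. ennreal (dyn p0 P (Suc n) (xs(Suc n := y), us)) \<partial>?PU (Suc n) \<partial>?X)
       = (\<integral>\<^sup>+y. D xs * (\<integral>\<^sup>+v. ennreal (P n (xs n) v y) \<partial>?U) \<partial>?X)"
      by (rule nn_integral_cong) (simp add: step1 space_restrict_space)
    also have "\<dots> = D xs * (\<integral>\<^sup>+y. \<integral>\<^sup>+v. ennreal (P n (xs n) v y) \<partial>?U \<partial>?X)"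
      by (rule nn_integral_cmult) (rule sigma_finite_measure.borel_measurable_nn_integral_fst[OF sf_restr[OF Ub] Qm, simplified])
    also have "(\<integral>\<^sup>+y. \<integral>\<^sup>+v. ennreal (P n (xs n) v y) \<partial>?U \<partial>?X) = (\<integral>\<^sup>+v. \<integral>\<^sup>+y. ennreal (P n (xs n) v y) \<partial>?X \<partial>?U)"
      using XU.Fubini[OF Qm] by simp
    also have "\<dots> = (\<integral>\<^sup>+v. 1 \<partial>?U)"
      by (rule nn_integral_cong) (use Suc.prems(2) xsn in \<open>auto simp: is_density_def space_restrict_space\<close>)
    also have "\<dots> = ?\<mu>"
      using Ub by (simp add: emeasure_restrict_space space_restrict_space)
    finally show ?thesis .
  qed
  have "(\<integral>\<^sup>+\<tau>. ennreal (dyn p0 P (Suc n) \<tau>) \<partial>traj_M X U (Suc n))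
      = (\<integral>\<^sup>+xs. \<integral>\<^sup>+us. ennreal (dyn p0 P (Suc n) (xs, us)) \<partial>?PU (Suc n) \<partial>?PX (Suc n))"
    by (simp add: traj_M_def sigma_finite_measure.nn_integral_fst[OF sfU Fm])
  also have "\<dots> = (\<integral>\<^sup>+xs. \<integral>\<^sup>+y. \<integral>\<^sup>+us. ennreal (dyn p0 P (Suc n) (xs(Suc n := y), us)) \<partial>?PU (Suc n) \<partial>?X \<partial>?PX n)"
    unfolding atMost_Suc by (rule PX.product_nn_integral_insert) (use Hm in \<open>auto simp: atMost_Suc\<close>)
  also have "\<dots> = (\<integral>\<^sup>+xs. D xs * ?\<mu> \<partial>?PX n)"
    by (rule nn_integral_cong) (simp add: inner)
  also have "\<dots> = (\<integral>\<^sup>+xs. D xs \<partial>?PX n) * ?\<mu>"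
    by (rule nn_integral_multc) (rule Dmeas)
  also have "(\<integral>\<^sup>+xs. D xs \<partial>?PX n) = ?\<mu> ^ n"
    unfolding D_def using IH by (simp add: traj_M_def sigma_finite_measure.nn_integral_fst[OF sfU Dm])
  finally show ?case by (simp add: mult.commute)
qed



lemma elog_mult: assumes "0 < k" shows "elog (ennreal k * I) = ereal (ln k) + elog I"
proof (cases I rule: ennreal_cases)
  case (real r)
  then show ?thesis using assms
    by (cases "r = 0") (auto simp: elog_def ennreal_mult'[symmetric] ln_mult)
next
  case top
  then show ?thesis using assms by (simp add: elog_def ennreal_mult_top)
qed

lemma ereal_lin: "(a::real) \<noteq> 0 \<Longrightarrow> ereal (1/a) * (ereal b + e) = ereal (b/a) + ereal (1/a) * e"
  by (cases e) (auto simp: field_simps)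

lemma ereal_add_cancel_le: "ereal b + x \<le> ereal b + y \<longleftrightarrow> x \<le> y"
  by (cases x; cases y) auto



lemma key_real:
  fixes d L \<mu> Z C \<eta> :: real and T :: nat
  assumes "d > 0" "\<mu> > 0" "Z > 0"
  shows "(d * exp L) powr (1 + \<eta>) * (d * (1/\<mu>)^T * exp (- C) / Z) powr (1 - (1 + \<eta>))
       = (Z * \<mu>^T) powr \<eta> * (d * exp L * exp (\<eta> * C + \<eta> * L))"
proof -
  have l1: "ln (d * exp L) = ln d + L" using assms by (simp add: ln_mult)
  have l2: "ln (d * (1/\<mu>)^T * exp (- C) / Z) = ln d - T * ln \<mu> - C - ln Z"
    using assms by (simp add: ln_mult ln_div ln_realpow)
  have l3: "ln (Z * \<mu>^T) = ln Z + T * ln \<mu>" using assms by (simp add: ln_mult ln_realpow)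
  have l4: "d * exp L * exp (\<eta> * C + \<eta> * L) = exp (ln d + L + \<eta> * C + \<eta> * L)"
    using assms by (simp add: exp_add)
  have "(d * exp L) powr (1 + \<eta>) * (d * (1/\<mu>)^T * exp (- C) / Z) powr (1 - (1 + \<eta>))
      = exp ((1 + \<eta>) * (ln d + L)) * exp ((1 - (1 + \<eta>)) * (ln d - T * ln \<mu> - C - ln Z))"
    using assms by (simp add: powr_def l1 l2 del: ln_mult)
  also have "\<dots> = exp (\<eta> * (ln Z + T * ln \<mu>)) * exp (ln d + L + \<eta> * C + \<eta> * L)"
    unfolding exp_add[symmetric] by (simp add: algebra_simps)
  also have "\<dots> = (Z * \<mu>^T) powr \<eta> * (d * exp L * exp (\<eta> * C + \<eta> * L))"
    using assms by (simp add: powr_def l3 l4 del: ln_mult)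
  finally show ?thesis .
qed

theorem theorem1:
  fixes X :: "'x::euclidean_space set" and U :: "'u::euclidean_space set" and T :: nat
    and p0 :: "'x \<Rightarrow> real" and P :: "nat \<Rightarrow> 'x \<Rightarrow> 'u \<Rightarrow> 'x \<Rightarrow> real"
    and c :: "nat \<Rightarrow> 'x \<Rightarrow> 'u \<Rightarrow> real" and cT :: "'x \<Rightarrow> real" and \<eta> :: real
  assumes X_borel: "X \<in> sets lborel" and U_borel: "U \<in> sets lborel"
    and U_pos: "0 < emeasure lborel U" and U_fin: "emeasure lborel U < \<infinity>"
    and T_pos: "0 < T"
    and p0_dens: "is_density (restrict_space lborel X) p0"
    and P_meas: "\<forall>t<T. (\<lambda>((x, u), y). P t x u y) \<in> borel_measurable
        ((restrict_space lborel X \<Otimes>\<^sub>M restrict_space lborel U) \<Otimes>\<^sub>M restrict_space lborel X)"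
    and P_dens: "\<forall>t<T. \<forall>x\<in>X. \<forall>u\<in>U. is_density (restrict_space lborel X) (P t x u)"
    and c_meas: "\<forall>t<T. (\<lambda>(x, u). c t x u) \<in> borel_measurable
        (restrict_space lborel X \<Otimes>\<^sub>M restrict_space lborel U)"
    and c_nonneg: "\<forall>t<T. \<forall>x\<in>X. \<forall>u\<in>U. 0 \<le> c t x u"
    and cT_meas: "cT \<in> borel_measurable (restrict_space lborel X)"
    and cT_nonneg: "\<forall>x\<in>X. 0 \<le> cT x"
    and eta: "\<eta> > -1" "\<eta> \<noteq> 0"
  shows "\<forall>\<pi>\<in>policies X U T.
     (\<forall>\<pi>'\<in>policies X U T.
        renyi (traj_M X U T) (1 + \<eta>) (p_pi p0 P \<pi> T) (p_opt X U p0 P c cT T)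
        \<le> renyi (traj_M X U T) (1 + \<eta>) (p_pi p0 P \<pi>' T) (p_opt X U p0 P c cT T))
     \<longleftrightarrow>
     (\<forall>\<pi>'\<in>policies X U T.
        rs_objective X U p0 P c cT T \<eta> \<pi> \<le> rs_objective X U p0 P c cT T \<eta> \<pi>')"
proof -
  let ?X = "restrict_space lborel X"
  let ?U = "restrict_space lborel U"
  let ?M = "traj_M X U T"
  define \<mu> where "\<mu> = measure lborel U"
  have emU: "emeasure lborel U = ennreal \<mu>"
    unfolding \<mu>_def using U_fin by (intro emeasure_eq_ennreal_measure) auto
  have mu_pos: "0 < \<mu>" using U_pos emU by simp
  have p0m: "p0 \<in> borel_measurable ?X" using p0_dens by (simp add: is_density_def)
  have dm: "dyn p0 P T \<in> borel_measurable ?M" by (rule dyn_meas[OF p0m P_meas])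
  have dnn: "\<And>\<tau>. \<tau> \<in> space ?M \<Longrightarrow> 0 \<le> dyn p0 P T \<tau>"
    by (rule dyn_nonneg[OF p0_dens P_dens])
  have dint: "(\<integral>\<^sup>+\<tau>. ennreal (dyn p0 P T \<tau>) \<partial>?M) = ennreal (\<mu> ^ T)"
    using dyn_int[OF X_borel U_borel p0_dens P_meas P_dens] emU mu_pos by (simp add: ennreal_power)
  have Cm: "total_cost c cT T \<in> borel_measurable ?M"
  proof -
    have "(\<lambda>\<tau>. cT (fst \<tau> T)) \<in> borel_measurable ?M"
      by (rule measurable_compose[OF fst_meas cT_meas]) simp
    moreover have "(\<lambda>\<tau>. \<Sum>t<T. c t (fst \<tau> t) (snd \<tau> t)) \<in> borel_measurable ?M"
      by (rule borel_measurable_sum) (rule c_comp_meas, use c_meas in auto)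
    ultimately show ?thesis unfolding total_cost_def[abs_def] by (rule borel_measurable_add)
  qed
  have Cnn: "\<And>\<tau>. \<tau> \<in> space ?M \<Longrightarrow> 0 \<le> total_cost c cT T \<tau>"
  proof -
    fix \<tau> assume "\<tau> \<in> space ?M"
    note sp = space_traj[OF this]
    show "0 \<le> total_cost c cT T \<tau>" unfolding total_cost_def
      using sp c_nonneg cT_nonneg by (intro add_nonneg_nonneg sum_nonneg) auto
  qed
  define J where "J = joint_opt U p0 P c cT T"
  have J_eq: "J \<tau> = dyn p0 P T \<tau> * (1 / \<mu>) ^ T * exp (- total_cost c cT T \<tau>)" for \<tau>
    unfolding J_def joint_opt_def \<mu>_def ..
  have Jm: "J \<in> borel_measurable ?M"
    unfolding J_eq[abs_def] using dm Cm by measurable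
  define Z where "Z = (\<integral>\<^sup>+\<tau>. ennreal (J \<tau>) \<partial>?M)"
  have Zfin: "Z < \<infinity>"
  proof -
    have "Z \<le> (\<integral>\<^sup>+\<tau>. ennreal (dyn p0 P T \<tau>) * ennreal ((1 / \<mu>) ^ T) \<partial>?M)"
      unfolding Z_def
    proof (rule nn_integral_mono)
      fix \<tau> assume sp: "\<tau> \<in> space ?M"
      have "J \<tau> \<le> dyn p0 P T \<tau> * (1 / \<mu>) ^ T"
        unfolding J_eq
      proof (rule mult_left_le)
        show "exp (- total_cost c cT T \<tau>) \<le> 1" using Cnn[OF sp] by simp
        show "0 \<le> dyn p0 P T \<tau> * (1 / \<mu>) ^ T" using dnn[OF sp] mu_pos by simp
      qed
      then have "ennreal (J \<tau>) \<le> ennreal (dyn p0 P T \<tau> * (1 / \<mu>) ^ T)"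
        by (rule ennreal_leI)
      then show "ennreal (J \<tau>) \<le> ennreal (dyn p0 P T \<tau>) * ennreal ((1 / \<mu>) ^ T)"
        using mu_pos by (subst ennreal_mult''[symmetric]) auto
    qed
    also have "\<dots> = ennreal (\<mu> ^ T) * ennreal ((1 / \<mu>) ^ T)"
      by (subst nn_integral_multc) (use dm dint in auto)
    also have "\<dots> = ennreal (\<mu> ^ T * (1 / \<mu>) ^ T)"
      using mu_pos by (subst ennreal_mult''[symmetric]) auto
    finally have "Z \<le> ennreal (\<mu> ^ T * (1 / \<mu>) ^ T)" .
    then show ?thesis by (rule order.strict_trans1) simp
  qed
  have Znz: "Z \<noteq> 0"
  proof
    assume "Z = 0"
    then have "AE \<tau> in ?M. ennreal (J \<tau>) = 0"
      unfolding Z_def using Jm by (subst (asm) nn_integral_0_iff_AE) auto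
    then have "AE \<tau> in ?M. ennreal (dyn p0 P T \<tau>) = 0"
    proof (rule AE_mp, intro AE_I2 impI)
      fix \<tau> assume sp: "\<tau> \<in> space ?M" and "ennreal (J \<tau>) = 0"
      then have "J \<tau> \<le> 0" by (simp add: ennreal_eq_0_iff)
      moreover have kp: "0 < (1/\<mu>)^T * exp (- total_cost c cT T \<tau>)" using mu_pos by simp
      ultimately have "dyn p0 P T \<tau> * ((1/\<mu>)^T * exp (- total_cost c cT T \<tau>)) \<le> 0"
        unfolding J_eq by (simp add: mult.assoc)
      then have "dyn p0 P T \<tau> \<le> 0"
        using kp by (smt (verit, best) mult_pos_pos)
      then show "ennreal (dyn p0 P T \<tau>) = 0" by (simp add: ennreal_eq_0_iff)
    qed
    then have "(\<integral>\<^sup>+\<tau>. ennreal (dyn p0 P T \<tau>) \<partial>?M) = 0"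
      using dm by (subst nn_integral_0_iff_AE) auto
    then show False using dint mu_pos by simp
  qed
  obtain Zr where Zr: "Z = ennreal Zr" "0 < Zr"
    using Zfin Znz by (cases Z rule: ennreal_cases) (auto simp: not_less_iff_gr_or_eq)
  have popt: "p_opt X U p0 P c cT T \<tau> = J \<tau> / Zr" for \<tau>
    unfolding p_opt_def J_def[symmetric] Z_def[symmetric] Zr(1) using Zr(2) by simp
  define \<kappa> where "\<kappa> = (Zr * \<mu> ^ T) powr \<eta>"
  have kpos: "0 < \<kappa>" unfolding \<kappa>_def using Zr mu_pos by simp
  have key: "renyi ?M (1 + \<eta>) (p_pi p0 P \<pi> T) (p_opt X U p0 P c cT T)
      = ereal (ln \<kappa> / \<eta>) + rs_objective X U p0 P c cT T \<eta> \<pi>" if pol: "\<pi> \<in> policies X U T" for \<pi>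
  proof -
    have \<pi>m: "(\<lambda>\<tau>. \<pi> t (fst \<tau> t) (snd \<tau> t)) \<in> borel_measurable ?M" if "t < T" for t
      by (rule c_comp_meas) (use pol that in \<open>auto simp: policies_def\<close>)
    have \<pi>nn: "0 \<le> \<pi> t (fst \<tau> t) (snd \<tau> t)" if "t < T" "\<tau> \<in> space ?M" for t \<tau>
      using pol that space_traj[OF that(2)] by (auto simp: policies_def is_density_def space_restrict_space)
    define S where "S \<tau> = p_pi p0 P \<pi> T \<tau> *
       exp (\<eta> * cT (fst \<tau> T) + \<eta> * (\<Sum>t<T. c t (fst \<tau> t) (snd \<tau> t) + ln (\<pi> t (fst \<tau> t) (snd \<tau> t))))" for \<tau>
    have Sm: "(\<lambda>\<tau>. ennreal (S \<tau>)) \<in> borel_measurable ?M"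
    proof -
      have a: "(\<lambda>\<tau>. cT (fst \<tau> T)) \<in> borel_measurable ?M"
        by (rule measurable_compose[OF fst_meas cT_meas]) simp
      have b: "(\<lambda>\<tau>. \<Sum>t<T. c t (fst \<tau> t) (snd \<tau> t) + ln (\<pi> t (fst \<tau> t) (snd \<tau> t))) \<in> borel_measurable ?M"
        by (rule borel_measurable_sum, rule borel_measurable_add)
           (auto intro!: c_comp_meas borel_measurable_ln \<pi>m simp: c_meas)
      have e: "(\<lambda>\<tau>. \<Prod>t<T. \<pi> t (fst \<tau> t) (snd \<tau> t)) \<in> borel_measurable ?M"
        by (rule borel_measurable_prod) (auto intro: \<pi>m)
      have pm: "p_pi p0 P \<pi> T \<in> borel_measurable ?M"
        unfolding p_pi_def[abs_def] using dm e by (rule borel_measurable_times)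
      have lin: "(\<lambda>\<tau>. \<eta> * cT (fst \<tau> T) + \<eta> * (\<Sum>t<T. c t (fst \<tau> t) (snd \<tau> t) + ln (\<pi> t (fst \<tau> t) (snd \<tau> t)))) \<in> borel_measurable ?M"
        by (intro borel_measurable_add borel_measurable_times borel_measurable_const a b)
      have ex: "(\<lambda>\<tau>. exp (\<eta> * cT (fst \<tau> T) + \<eta> * (\<Sum>t<T. c t (fst \<tau> t) (snd \<tau> t) + ln (\<pi> t (fst \<tau> t) (snd \<tau> t))))) \<in> borel_measurable ?M"
        using measurable_compose[OF lin borel_measurable_exp] by (simp add: comp_def)
      have "S \<in> borel_measurable ?M"
        unfolding S_def[abs_def] using pm ex by (rule borel_measurable_times)
      then show ?thesis using measurable_compose[OF _ measurable_ennreal] by (simp add: comp_def)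
    qed
    have pw: "ennreal (p_pi p0 P \<pi> T \<tau> powr (1 + \<eta>) * p_opt X U p0 P c cT T \<tau> powr (1 - (1 + \<eta>))) *
        indicator {v. p_pi p0 P \<pi> T v * p_opt X U p0 P c cT T v > 0} \<tau> = ennreal \<kappa> * ennreal (S \<tau>)"
      if sp: "\<tau> \<in> space ?M" for \<tau>
    proof -
      define d where "d = dyn p0 P T \<tau>"
      define q where "q = (\<Prod>t<T. \<pi> t (fst \<tau> t) (snd \<tau> t))"
      have p1: "p_pi p0 P \<pi> T \<tau> = d * q" unfolding p_pi_def d_def q_def ..
      have dn: "0 \<le> d" unfolding d_def by (rule dnn[OF sp])
      have qn: "0 \<le> q" unfolding q_def by (rule prod_nonneg) (use \<pi>nn sp in auto)
      show ?thesis
      proof (cases "d * q = 0")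
        case True
        then have z: "p_pi p0 P \<pi> T \<tau> = 0" using p1 by simp
        then show ?thesis by (simp add: S_def indicator_def)
      next
        case False
        then have dpos: "0 < d" and qpos: "0 < q" using dn qn by auto
        have \<pi>pos: "0 < \<pi> t (fst \<tau> t) (snd \<tau> t)" if "t < T" for t
        proof -
          have "\<pi> t (fst \<tau> t) (snd \<tau> t) \<noteq> 0"
          proof
            assume "\<pi> t (fst \<tau> t) (snd \<tau> t) = 0"
            then have "q = 0" unfolding q_def using that by (subst prod_zero_iff) auto
            then show False using qpos by simp
          qed
          then show ?thesis using \<pi>nn[OF that sp] by simp
        qed
        define L where "L = (\<Sum>t<T. ln (\<pi> t (fst \<tau> t) (snd \<tau> t)))"
        have qL: "q = exp L" unfolding q_def L_def
          by (subst exp_sum) (auto intro!: prod.cong simp: \<pi>pos)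
        define C where "C = total_cost c cT T \<tau>"
        have p2: "p_opt X U p0 P c cT T \<tau> = d * (1/\<mu>)^T * exp (- C) / Zr"
          unfolding popt J_eq d_def C_def ..
        have p2pos: "0 < p_opt X U p0 P c cT T \<tau>" unfolding p2 using dpos mu_pos Zr by simp
        have Sexp: "S \<tau> = d * exp L * exp (\<eta> * C + \<eta> * L)"
          unfolding S_def p1 qL C_def L_def total_cost_def
          by (simp add: sum.distrib algebra_simps)
        have "p_pi p0 P \<pi> T \<tau> powr (1 + \<eta>) * p_opt X U p0 P c cT T \<tau> powr (1 - (1 + \<eta>))
            = \<kappa> * S \<tau>"
          unfolding p1 p2 qL Sexp \<kappa>_def by (rule key_real[OF dpos mu_pos Zr(2)])
        moreover have "\<tau> \<in> {v. p_pi p0 P \<pi> T v * p_opt X U p0 P c cT T v > 0}"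
          using p1 dpos qpos p2pos by simp
        ultimately show ?thesis using kpos by (simp add: ennreal_mult')
      qed
    qed
    have "renyi ?M (1 + \<eta>) (p_pi p0 P \<pi> T) (p_opt X U p0 P c cT T)
        = ereal (1 / \<eta>) * elog (\<integral>\<^sup>+\<tau>. ennreal \<kappa> * ennreal (S \<tau>) \<partial>?M)"
    proof -
      have I: "(\<integral>\<^sup>+u. ennreal (p_pi p0 P \<pi> T u powr (1 + \<eta>) * p_opt X U p0 P c cT T u powr (1 - (1 + \<eta>))) *
          indicator {v. p_pi p0 P \<pi> T v * p_opt X U p0 P c cT T v > 0} u \<partial>?M)
          = (\<integral>\<^sup>+\<tau>. ennreal \<kappa> * ennreal (S \<tau>) \<partial>?M)"
        by (rule nn_integral_cong) (rule pw)
      show ?thesis unfolding renyi_def I by simp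
    qed
    also have "\<dots> = ereal (1 / \<eta>) * elog (ennreal \<kappa> * (\<integral>\<^sup>+\<tau>. ennreal (S \<tau>) \<partial>?M))"
      by (simp add: nn_integral_cmult[OF Sm])
    also have "\<dots> = ereal (ln \<kappa> / \<eta>) + ereal (1 / \<eta>) * elog (\<integral>\<^sup>+\<tau>. ennreal (S \<tau>) \<partial>?M)"
      by (simp add: elog_mult[OF kpos] ereal_lin[OF eta(2)])
    also have "ereal (1 / \<eta>) * elog (\<integral>\<^sup>+\<tau>. ennreal (S \<tau>) \<partial>?M) = rs_objective X U p0 P c cT T \<eta> \<pi>"
      unfolding rs_objective_def S_def ..
    finally show ?thesis .
  qed
  show ?thesis using key by (simp add: ereal_add_cancel_le)
qed

end
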